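(* Let $\mathsf k$ be an algebraically closed field of characteristic $p>0$, and let $m<n$, $l_2$, $l_3$ be nonnegative integers. If there exists $\beta\in\mathsf k[x,y]$ with $\beta(0,y)=\beta(x,0)=0$ and $\delta^2(\beta)(z_1,z_2,z_3)=z_1^{p^{l_3}}z_2^{p^{l_2+m}}z_3^{p^{l_2+n}}$, then $p\neq2$ and $l_3-l_2\in\{m,n\}$. Conversely, if $p\ne2$, then such a $\beta$ exists, namely $\beta(x,y)=\frac12x^{2p^{l_3}}y^{p^{l_2+n}}$ if $l_3-l_2=m$, and $\beta(x,y)=x^{p^{l_3}+p^{l_2+m}}y^{p^{l_3}}+\frac12x^{p^{l_2+m}}y^{2p^{l_3}}$ if $l_3-l_2=n$.
   Context: For $\beta\in\mathsf k[x,y]$, $\delta^2(\beta)(z_1,z_2,z_3)=\beta(z_1,z_2)+\beta(z_1+z_2,z_3)-\beta(z_2,z_3)-\beta(z_1,z_2+z_3)$. *)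

theory Defs
  imports "HOL-Computational_Algebra.Polynomial"
begin

text \<open>Bivariate polynomials k[x,y] are represented as 'a poly poly: the outer
variable is y, the coefficients are polynomials in x.
bieval h beta a b substitutes x := a, y := b (coefficients mapped via h).\<close>

definition bieval :: "('a::comm_ring_1 \<Rightarrow> 'b::comm_ring_1) \<Rightarrow> 'a poly poly \<Rightarrow> 'b \<Rightarrow> 'b \<Rightarrow> 'b" where
  "bieval h \<beta> a b = poly (map_poly (\<lambda>c. poly (map_poly h c) a) \<beta>) b"

definition const3 :: "'a::comm_ring_1 \<Rightarrow> 'a poly poly poly" where
  "const3 c = [:[:[:c:]:]:]"

definition Z1 :: "'a::comm_ring_1 poly poly poly" where "Z1 = [:[:[:0, 1:]:]:]"
definition Z2 :: "'a::comm_ring_1 poly poly poly" where "Z2 = [:[:0, 1:]:]"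
definition Z3 :: "'a::comm_ring_1 poly poly poly" where "Z3 = [:0, 1:]"

definition delta2 :: "'a::comm_ring_1 poly poly \<Rightarrow> 'a poly poly poly" where
  "delta2 \<beta> = bieval const3 \<beta> Z1 Z2 + bieval const3 \<beta> (Z1 + Z2) Z3
              - bieval const3 \<beta> Z2 Z3 - bieval const3 \<beta> Z1 (Z2 + Z3)"

text \<open>beta(0,y) = 0 and beta(x,0) = 0 as polynomials in one variable.\<close>

definition normalized2 :: "'a::comm_ring_1 poly poly \<Rightarrow> bool" where
  "normalized2 \<beta> \<longleftrightarrow> bieval (\<lambda>c. [:c:]) \<beta> 0 [:0, 1:] = 0 \<and> bieval (\<lambda>c. [:c:]) \<beta> [:0, 1:] 0 = 0"

definition mon2 :: "'a::comm_ring_1 \<Rightarrow> nat \<Rightarrow> nat \<Rightarrow> 'a poly poly" where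
  "mon2 c i j = monom (monom c i) j"

end

theory Submission imports Defs "HOL-Computational_Algebra.Primes" begin

definition rhom :: "('a::comm_ring_1 \<Rightarrow> 'b::comm_ring_1) \<Rightarrow> bool" where
  "rhom f \<longleftrightarrow> f 0 = 0 \<and> f 1 = 1 \<and> (\<forall>a b. f (a + b) = f a + f b) \<and> (\<forall>a b. f (a * b) = f a * f b)"

lemma rhom_0: "rhom f \<Longrightarrow> f 0 = 0" and rhom_1: "rhom f \<Longrightarrow> f 1 = 1"
  and rhom_add: "rhom f \<Longrightarrow> f (a + b) = f a + f b" and rhom_mult: "rhom f \<Longrightarrow> f (a * b) = f a * f b"
  by (auto simp: rhom_def)

lemma rhom_minus: assumes "rhom f" shows "f (- a) = - f a"
proof -
  have "f a + f (- a) = 0" using rhom_add[OF assms, of a "-a"] rhom_0[OF assms] by simp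
  thus ?thesis by (simp add: eq_neg_iff_add_eq_0 add.commute)
qed

lemma rhom_diff: "rhom f \<Longrightarrow> f (a - b) = f a - f b"
  using rhom_add[of f a "-b"] rhom_minus[of f b] by simp

lemma rhom_power: "rhom f \<Longrightarrow> f (a ^ n) = f a ^ n"
  by (induction n) (simp_all add: rhom_1 rhom_mult)

lemma rhom_sum: "rhom f \<Longrightarrow> f (sum g A) = (\<Sum>x\<in>A. f (g x))"
  by (induction A rule: infinite_finite_induct) (simp_all add: rhom_0 rhom_add)

lemma rhom_of_nat: "rhom f \<Longrightarrow> f (of_nat n) = of_nat n"
  by (induction n) (simp_all add: rhom_0 rhom_1 rhom_add)

lemma rhom_id: "rhom (\<lambda>x. x)" and rhom_id': "rhom id" by (auto simp: rhom_def)

lemma rhom_const: "rhom (\<lambda>c. [:c:])" by (auto simp: rhom_def)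

lemma rhom_const3: "rhom const3" by (auto simp: rhom_def const3_def pCons_one)

lemma map_poly_add_rhom: "rhom f \<Longrightarrow> map_poly f (P + Q) = map_poly f P + map_poly f Q"
  by (intro poly_eqI) (simp add: coeff_map_poly rhom_0 rhom_add)

lemma map_poly_mult_rhom: "rhom f \<Longrightarrow> map_poly f (P * Q) = map_poly f P * map_poly f Q"
  by (intro poly_eqI) (simp add: coeff_map_poly rhom_0 coeff_mult rhom_sum rhom_mult)

definition ev :: "('a::comm_ring_1 \<Rightarrow> 'b::comm_ring_1) \<Rightarrow> 'b \<Rightarrow> 'a poly \<Rightarrow> 'b" where
  "ev f x P = poly (map_poly f P) x"

lemma rhom_ev: "rhom f \<Longrightarrow> rhom (ev f x)"
  unfolding rhom_def[of "ev f x"] ev_def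
  by (simp add: map_poly_add_rhom map_poly_mult_rhom rhom_0 rhom_1)

lemma rhom_poly: "rhom g \<Longrightarrow> g (poly P y) = poly (map_poly g P) (g y)"
  by (induction P rule: pCons_induct) (simp_all add: map_poly_pCons rhom_0 rhom_add rhom_mult)

lemma bieval_rhom:
  assumes g: "rhom g" and h: "rhom h"
  shows "g (bieval h \<beta> a b) = bieval (g \<circ> h) \<beta> (g a) (g b)"
proof -
  have "g (bieval h \<beta> a b) = poly (map_poly g (map_poly (\<lambda>c. poly (map_poly h c) a) \<beta>)) (g b)"
    unfolding bieval_def by (rule rhom_poly[OF g])
  also have "map_poly g (map_poly (\<lambda>c. poly (map_poly h c) a) \<beta>) =
      map_poly (g \<circ> (\<lambda>c. poly (map_poly h c) a)) \<beta>"
    by (rule map_poly_map_poly) (simp_all add: rhom_0[OF g])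
  also have "\<dots> = map_poly (\<lambda>c. poly (map_poly (g \<circ> h) c) (g a)) \<beta>"
    by (rule map_poly_cong) (simp add: rhom_poly[OF g] map_poly_map_poly rhom_0[OF g] rhom_0[OF h])
  finally show ?thesis unfolding bieval_def .
qed

lemma bieval_add: "rhom h \<Longrightarrow> bieval h (\<beta>1 + \<beta>2) a b = bieval h \<beta>1 a b + bieval h \<beta>2 a b"
proof -
  assume h: "rhom h"
  have eq: "(\<lambda>c. poly (map_poly h c) a) = ev h a" by (simp add: ev_def fun_eq_iff)
  show ?thesis unfolding bieval_def eq by (simp add: map_poly_add_rhom[OF rhom_ev[OF h]])
qed

lemma bieval_mon2: "rhom h \<Longrightarrow> bieval h (mon2 c i j) a b = h c * a ^ i * b ^ j"
  unfolding bieval_def mon2_def by (simp add: map_poly_monom rhom_0 poly_monom)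

definition ev3 where "ev3 f x y z = ev (ev (ev f x) y) z"

lemma rhom_ev3: "rhom f \<Longrightarrow> rhom (ev3 f x y z)"
  unfolding ev3_def by (intro rhom_ev)

lemma ev3_simps: assumes "rhom f"
  shows "ev3 f x y z Z1 = x" "ev3 f x y z Z2 = y" "ev3 f x y z Z3 = z" "ev3 f x y z (const3 c) = f c"
  using assms by (simp_all add: ev3_def ev_def Z1_def Z2_def Z3_def const3_def map_poly_pCons rhom_0 rhom_1)

lemma ev3_delta2:
  assumes "rhom f"
  shows "ev3 f x y z (delta2 \<beta>) = bieval f \<beta> x y + bieval f \<beta> (x + y) z - bieval f \<beta> y z - bieval f \<beta> x (y + z)"
proof -
  have c: "ev3 f x y z \<circ> const3 = f" using ev3_simps(4)[OF assms] by auto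
  show ?thesis unfolding delta2_def
    using rhom_ev3[OF assms, of x y z]
    by (simp add: rhom_add rhom_diff bieval_rhom rhom_const3 c ev3_simps[OF assms])
qed

lemma frob1:
  assumes "prime CHAR('b::comm_ring_1)"
  shows "((x::'b) + y) ^ CHAR('b) = x ^ CHAR('b) + y ^ CHAR('b)"
proof -
  let ?p = "CHAR('b)"
  have p0: "?p \<noteq> 0" using assms by auto
  have "(x+y)^?p = (\<Sum>k\<le>?p. of_nat (?p choose k) * x^k * y^(?p-k))" by (rule binomial_ring)
  also have "\<dots> = (\<Sum>k\<in>{0,?p}. of_nat (?p choose k) * x^k * y^(?p-k))"
  proof (rule sum.mono_neutral_right)
    show "\<forall>k\<in>{..?p} - {0, ?p}. of_nat (?p choose k) * x^k * y^(?p-k) = 0"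
    proof
      fix k assume k: "k \<in> {..?p} - {0, ?p}"
      have "?p dvd (?p choose k)" using k p0 assms by (intro dvd_choose_prime) auto
      hence "(of_nat (?p choose k) :: 'b) = 0" by (simp add: of_nat_eq_0_iff_char_dvd)
      thus "of_nat (?p choose k) * x^k * y^(?p-k) = 0" by simp
    qed
  qed auto
  also have "\<dots> = x ^ ?p + y ^ ?p" using p0 by (simp add: add.commute)
  finally show ?thesis .
qed

lemma frob:
  assumes "prime CHAR('b::comm_ring_1)"
  shows "((x::'b) + y) ^ (CHAR('b) ^ k) = x ^ (CHAR('b) ^ k) + y ^ (CHAR('b) ^ k)"
proof (induction k)
  case (Suc k)
  have "(x + y) ^ (CHAR('b) ^ Suc k) = ((x + y) ^ (CHAR('b) ^ k)) ^ CHAR('b)"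
    by (simp add: power_mult[symmetric] mult.commute)
  also have "\<dots> = (x ^ (CHAR('b) ^ k)) ^ CHAR('b) + (y ^ (CHAR('b) ^ k)) ^ CHAR('b)"
    using Suc frob1[OF assms] by simp
  finally show ?case by (simp add: power_mult[symmetric] mult.commute)
qed simp

definition M3 :: "nat \<Rightarrow> nat \<Rightarrow> nat \<Rightarrow> 'a::comm_ring_1 poly poly poly" where
  "M3 a b c = monom (monom (monom 1 a) b) c"

lemma const_pow: "[:u:] ^ n = [:u ^ n:]"
  by (induction n) (simp_all add: pCons_one mult.commute)

lemma X_pow: "[:0, 1:] ^ n = monom 1 n"
  by (simp add: monom_altdef)

lemma mono3: "(Z1::'a::comm_ring_1 poly poly poly) ^ a * Z2 ^ b * Z3 ^ c = M3 a b c"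
  unfolding Z1_def Z2_def Z3_def M3_def
  by (simp add: const_pow X_pow smult_monom flip: smult_monom_mult)

definition c3 :: "'a::comm_ring_1 poly poly poly \<Rightarrow> nat \<Rightarrow> nat \<Rightarrow> nat \<Rightarrow> 'a" where
  "c3 F a b c = coeff (coeff (coeff F c) b) a"

lemma c3_M3: "c3 (M3 a b c) a' b' c' = (if a = a' \<and> b = b' \<and> c = c' then 1 else 0)"
  by (simp add: c3_def M3_def coeff_monom)

lemma c3_add: "c3 (F + G) a b c = c3 F a b c + c3 G a b c"
  and c3_diff: "c3 (F - G) a b c = c3 F a b c - c3 G a b c"
  by (simp_all add: c3_def)

lemma alt_zero:
  fixes b :: "'r::comm_ring_1 \<Rightarrow> 'r \<Rightarrow> 'r"
  assumes "\<And>x y z. D x y z = b x y + b (x + y) z - b y z - b x (y + z)"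
  shows "D x y z - D x z y - D y x z + D y z x + D z x y - D z y x = 0"
  unfolding assms by (simp add: algebra_simps)

lemma alg1:
  fixes Z1 Z2 Z3 h :: "'r::comm_ring_1"
  assumes "h * 2 = 1" "(Z1+Z2)^A = Z1^A+Z2^A" "(Z2+Z3)^C = Z2^C+Z3^C"
  shows "h*Z1^(2*A)*Z2^C + h*(Z1+Z2)^(2*A)*Z3^C - h*Z2^(2*A)*Z3^C - h*Z1^(2*A)*(Z2+Z3)^C = Z1^A*Z2^A*Z3^C"
proof -
  have e: "\<And>x::'r. x^(2*A) = (x^A)^2" by (simp add: power_mult[symmetric] mult.commute)
  have "h*Z1^(2*A)*Z2^C + h*(Z1+Z2)^(2*A)*Z3^C - h*Z2^(2*A)*Z3^C - h*Z1^(2*A)*(Z2+Z3)^C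
     = (h*2)*(Z1^A*Z2^A*Z3^C)" unfolding e assms(2,3) by (simp add: algebra_simps power2_eq_square)
  thus ?thesis using assms(1) by simp
qed

lemma alg2:
  fixes Z1 Z2 Z3 h :: "'r::comm_ring_1"
  assumes "h * 2 = 1" "(Z1+Z2)^A = Z1^A+Z2^A" "(Z1+Z2)^B = Z1^B+Z2^B" "(Z2+Z3)^A = Z2^A+Z3^A"
  shows "Z1^(A+B)*Z2^A + h*Z1^B*Z2^(2*A) + ((Z1+Z2)^(A+B)*Z3^A + h*(Z1+Z2)^B*Z3^(2*A))
     - (Z2^(A+B)*Z3^A + h*Z2^B*Z3^(2*A)) - (Z1^(A+B)*(Z2+Z3)^A + h*Z1^B*(Z2+Z3)^(2*A)) = Z1^A*Z2^B*Z3^A"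
proof -
  have e: "\<And>x::'r. x^(2*A) = (x^A)^2" by (simp add: power_mult[symmetric] mult.commute)
  have "Z1^(A+B)*Z2^A + h*Z1^B*Z2^(2*A) + ((Z1+Z2)^(A+B)*Z3^A + h*(Z1+Z2)^B*Z3^(2*A))
     - (Z2^(A+B)*Z3^A + h*Z2^B*Z3^(2*A)) - (Z1^(A+B)*(Z2+Z3)^A + h*Z1^B*(Z2+Z3)^(2*A))
     = Z1^A*Z2^B*Z3^A + ((Z2^A*Z1^B*Z3^A) - (h*2)*(Z1^B*Z2^A*Z3^A))"
    unfolding e power_add assms(2,3,4) by (simp add: algebra_simps power2_eq_square)
  thus ?thesis using assms(1) by simp
qed

theorem mainTheorem14:
  fixes m n l2 l3 :: nat
  assumes "CHAR('a::alg_closed_field) > 0"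
    and "m < n"
  defines "p \<equiv> CHAR('a)"
  defines "rhs \<equiv> Z1 ^ (p ^ l3) * Z2 ^ (p ^ (l2 + m)) * Z3 ^ (p ^ (l2 + n)) :: 'a poly poly poly"
  shows "((\<exists>\<beta> :: 'a poly poly. normalized2 \<beta> \<and> delta2 \<beta> = rhs)
            \<longrightarrow> p \<noteq> 2 \<and> (int l3 - int l2 = int m \<or> int l3 - int l2 = int n))
       \<and> (p \<noteq> 2 \<longrightarrow>
            (int l3 - int l2 = int m \<longrightarrow>
               (let \<beta> = mon2 (1 / 2) (2 * p ^ l3) (p ^ (l2 + n))
                in normalized2 \<beta> \<and> delta2 \<beta> = rhs))
          \<and> (int l3 - int l2 = int n \<longrightarrow>
               (let \<beta> = mon2 1 (p ^ l3 + p ^ (l2 + m)) (p ^ l3)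
                          + mon2 (1 / 2) (p ^ (l2 + m)) (2 * p ^ l3)
                in normalized2 \<beta> \<and> delta2 \<beta> = rhs)))"
proof -
  have pprime: "prime p" unfolding p_def using assms(1) by (rule prime_CHAR_semidom)
  have p1: "p > 1" using pprime prime_gt_1_nat by blast
  define A where "A = p ^ l3"
  define B where "B = p ^ (l2 + m)"
  define C where "C = p ^ (l2 + n)"
  have rhs_eq: "rhs = Z1 ^ A * Z2 ^ B * Z3 ^ C" unfolding rhs_def A_def B_def C_def ..
  have BC: "B \<noteq> C" unfolding B_def C_def using p1 assms(2) by (simp add: power_inject_exp)
  have AB: "A = B \<longleftrightarrow> l3 = l2 + m" unfolding A_def B_def using p1 by (simp add: power_inject_exp)
  have AC: "A = C \<longleftrightarrow> l3 = l2 + n" unfolding A_def C_def using p1 by (simp add: power_inject_exp)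
  have part1: "(\<exists>\<beta> :: 'a poly poly. normalized2 \<beta> \<and> delta2 \<beta> = rhs)
            \<longrightarrow> p \<noteq> 2 \<and> (int l3 - int l2 = int m \<or> int l3 - int l2 = int n)"
  proof
    assume "\<exists>\<beta> :: 'a poly poly. normalized2 \<beta> \<and> delta2 \<beta> = rhs"
    then obtain \<beta> :: "'a poly poly" where nb: "normalized2 \<beta>" and db: "delta2 \<beta> = rhs" by blast
    have "p \<noteq> 2"
    proof
      assume p2: "p = 2"
      have two: "(2::'a) = 0" using of_nat_CHAR[where 'a='a] p2 unfolding p_def by simp
      let ?b = "bieval (\<lambda>x::'a. x) \<beta>"
      have g: "rhom (ev (\<lambda>x::'a. x) (1::'a))" by (rule rhom_ev[OF rhom_id])
      have gc: "ev (\<lambda>x::'a. x) 1 \<circ> (\<lambda>c. [:c:]) = (\<lambda>x. x)" by (simp add: fun_eq_iff ev_def)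
      have g0: "ev (\<lambda>x::'a. x) 1 0 = 0" and gX: "ev (\<lambda>x::'a. x) 1 [:0,1:] = 1"
        by (simp_all add: ev_def map_poly_pCons)
      have n1: "?b 0 1 = 0"
        using arg_cong[OF nb[unfolded normalized2_def, THEN conjunct1], of "ev (\<lambda>x::'a. x) 1"]
        by (simp add: bieval_rhom[OF g rhom_const] gc g0 gX rhom_0[OF g])
      have n2: "?b 1 0 = 0"
        using arg_cong[OF nb[unfolded normalized2_def, THEN conjunct2], of "ev (\<lambda>x::'a. x) 1"]
        by (simp add: bieval_rhom[OF g rhom_const] gc g0 gX rhom_0[OF g])
      have "ev3 (\<lambda>x. x) 1 1 1 (delta2 \<beta>) = ev3 (\<lambda>x. x) (1::'a) 1 1 rhs" using db by simp
      moreover have "ev3 (\<lambda>x. x) (1::'a) 1 1 (delta2 \<beta>) = 0"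
        by (simp add: ev3_delta2[OF rhom_id] two n1 n2)
      moreover have "ev3 (\<lambda>x. x) (1::'a) 1 1 rhs = 1"
        unfolding rhs_eq using rhom_ev3[OF rhom_id, of "1::'a" 1 1]
        by (simp add: rhom_mult rhom_power ev3_simps[OF rhom_id])
      ultimately show False by simp
    qed
    moreover have "A = B \<or> A = C"
    proof (rule ccontr)
      assume nd: "\<not> (A = B \<or> A = C)"
      let ?b = "bieval const3 \<beta>"
      define D where "D = (\<lambda>x y z. ?b x y + ?b (x + y) z - ?b y z - ?b x (y + z))"
      define R where "R = (\<lambda>x y z :: 'a poly poly poly. x ^ A * y ^ B * z ^ C)"
      have DR: "D x y z = R x y z" for x y z
      proof -
        have "ev3 const3 x y z (delta2 \<beta>) = ev3 const3 x y z rhs" using db by simp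
        moreover have "ev3 const3 x y z (delta2 \<beta>) = D x y z"
          unfolding D_def by (simp add: ev3_delta2[OF rhom_const3])
        moreover have "ev3 const3 x y z rhs = R x y z"
          unfolding rhs_eq R_def using rhom_ev3[OF rhom_const3, of x y z]
          by (simp add: rhom_mult rhom_power ev3_simps[OF rhom_const3])
        ultimately show ?thesis by simp
      qed
      have "D Z1 Z2 Z3 - D Z1 Z3 Z2 - D Z2 Z1 Z3 + D Z2 Z3 Z1 + D Z3 Z1 Z2 - D Z3 Z2 Z1 = 0"
        by (rule alt_zero[where b = ?b]) (simp add: D_def)
      hence "R Z1 Z2 Z3 - R Z1 Z3 Z2 - R Z2 Z1 Z3 + R Z2 Z3 Z1 + R Z3 Z1 Z2 - R Z3 Z2 Z1 = 0"
        by (simp add: DR)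
      moreover have "R Z1 Z2 Z3 = M3 A B C" "R Z1 Z3 Z2 = M3 A C B" "R Z2 Z1 Z3 = M3 B A C"
        "R Z2 Z3 Z1 = M3 C A B" "R Z3 Z1 Z2 = M3 B C A" "R Z3 Z2 Z1 = M3 C B A"
        unfolding R_def by (simp_all add: mono3[symmetric] mult_ac)
      ultimately have "M3 A B C - M3 A C B - M3 B A C + M3 C A B + M3 B C A - M3 C B A = (0 :: 'a poly poly poly)"
        by simp
      hence "c3 (M3 A B C - M3 A C B - M3 B A C + M3 C A B + M3 B C A - M3 C B A :: 'a poly poly poly) A B C = 0"
        by (simp add: c3_def)
      thus False using nd BC by (simp add: c3_add c3_diff c3_M3)
    qed
    hence "int l3 - int l2 = int m \<or> int l3 - int l2 = int n" using AB AC by auto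
    ultimately show "p \<noteq> 2 \<and> (int l3 - int l2 = int m \<or> int l3 - int l2 = int n)" by blast
  qed
  have part2: "p \<noteq> 2 \<longrightarrow>
            (int l3 - int l2 = int m \<longrightarrow>
               (let \<beta> = mon2 (1 / 2) (2 * p ^ l3) (p ^ (l2 + n))
                in normalized2 \<beta> \<and> delta2 \<beta> = rhs))
          \<and> (int l3 - int l2 = int n \<longrightarrow>
               (let \<beta> = mon2 1 (p ^ l3 + p ^ (l2 + m)) (p ^ l3)
                          + mon2 (1 / 2) (p ^ (l2 + m)) (2 * p ^ l3)
                in normalized2 \<beta> \<and> delta2 \<beta> = rhs))"
  proof
    assume pn2: "p \<noteq> 2"
    have two: "(2::'a) \<noteq> 0"
    proof
      assume "(2::'a) = 0"
      hence "(of_nat 2 :: 'a) = 0" by simp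
      hence "p dvd 2" unfolding p_def by (simp only: of_nat_eq_0_iff_char_dvd)
      hence "p \<le> 2" by (rule dvd_imp_le) simp
      thus False using p1 pn2 by simp
    qed
    have c2: "const3 (2::'a) = 2" using rhom_of_nat[OF rhom_const3, of 2] by simp
    have h: "const3 (1/2::'a) * 2 = 1"
    proof -
      have e: "(1/2::'a) * 2 = 1" using two by simp
      have "const3 (1/2::'a) * 2 = const3 (1/2) * const3 2" by (simp add: c2)
      also have "\<dots> = const3 ((1/2::'a) * 2)" by (simp only: rhom_mult[OF rhom_const3])
      also have "\<dots> = 1" by (simp only: e rhom_1[OF rhom_const3])
      finally show ?thesis .
    qed
    have fR: "(x + y) ^ (p ^ k) = x ^ (p ^ k) + y ^ (p ^ k)" for x y :: "'a poly poly poly" and k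
      using frob[where 'b = "'a poly poly poly", of x y k] pprime unfolding p_def by simp
    have A0: "A > 0" "B > 0" "C > 0" using p1 by (simp_all add: A_def B_def C_def)
    show "(int l3 - int l2 = int m \<longrightarrow>
               (let \<beta> = mon2 (1 / 2) (2 * p ^ l3) (p ^ (l2 + n))
                in normalized2 \<beta> \<and> delta2 \<beta> = rhs))
          \<and> (int l3 - int l2 = int n \<longrightarrow>
               (let \<beta> = mon2 1 (p ^ l3 + p ^ (l2 + m)) (p ^ l3)
                          + mon2 (1 / 2) (p ^ (l2 + m)) (2 * p ^ l3)
                in normalized2 \<beta> \<and> delta2 \<beta> = rhs))"
    proof (intro conjI impI)
      assume "int l3 - int l2 = int m"
      hence "l3 = l2 + m" by simp
      hence BA: "B = A" using AB by simp
      show "let \<beta> = mon2 (1 / 2) (2 * p ^ l3) (p ^ (l2 + n))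
                in normalized2 \<beta> \<and> delta2 \<beta> = rhs"
        unfolding Let_def A_def[symmetric] C_def[symmetric] rhs_eq BA
      proof
        show "normalized2 (mon2 (1 / 2::'a) (2 * A) C)"
          unfolding normalized2_def using A0 by (simp add: bieval_mon2[OF rhom_const])
        show "delta2 (mon2 (1 / 2::'a) (2 * A) C) = Z1 ^ A * Z2 ^ A * Z3 ^ C"
          unfolding delta2_def bieval_mon2[OF rhom_const3]
          by (rule alg1[OF h]) (simp_all add: A_def C_def fR)
      qed
    next
      assume "int l3 - int l2 = int n"
      hence "l3 = l2 + n" by simp
      hence CA: "C = A" using AC by simp
      show "let \<beta> = mon2 1 (p ^ l3 + p ^ (l2 + m)) (p ^ l3)
                          + mon2 (1 / 2) (p ^ (l2 + m)) (2 * p ^ l3)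
                in normalized2 \<beta> \<and> delta2 \<beta> = rhs"
        unfolding Let_def A_def[symmetric] B_def[symmetric] rhs_eq CA
      proof
        show "normalized2 (mon2 (1::'a) (A + B) A + mon2 (1 / 2) B (2 * A))"
          unfolding normalized2_def using A0 by (simp add: bieval_add[OF rhom_const] bieval_mon2[OF rhom_const] power_0_left)
        show "delta2 (mon2 (1::'a) (A + B) A + mon2 (1 / 2) B (2 * A)) = Z1 ^ A * Z2 ^ B * Z3 ^ A"
          unfolding delta2_def bieval_add[OF rhom_const3] bieval_mon2[OF rhom_const3] rhom_1[OF rhom_const3] mult_1_left
          by (rule alg2[OF h]) (simp_all add: A_def B_def fR)
      qed
    qed
  qed
  show ?thesis using part1 part2 by blast
qed

end
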